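(* For the reduction instance $NTP([a_j]_{j\in A},W)$, the optimal value satisfies $B(S^* )=W$ if and only if there exists $A^*\subseteq A$ with $\sum_{j\in A^*}a_j=W$.
   Context: Reduction instance. Let $N\ge1$, $A=\{1,\dots,N\}$, positive integers $a_1,\dots,a_N$, positive integer $W\le\sum_{j\in A}a_j$. Set $M=N+\sum_{j\in A}a_j+1$, employees $\mathcal E=\{1,\dots,M\}$ (smaller index = more senior). For $k\in A$: $i_k=k+\sum_{j=1}^{k-1}a_j$ (critical employees), $\mathcal E^S_k=\{i: i_k<i\le i_k+a_k\}$ (stable block). Response delays: $r_{i_k}=\sum_{j=1}^{k}a_j$; for $i\in\mathcal E^S_k$, $r_i=\sum_{j=1}^{k-1}a_j$; $r_M=\sum_{j\in A}a_j$. Let $C^*_0=2\sum_j a_j$ and $H=C^*_0-W$. A schedule $S=(s_i,e_i)_{i\in\mathcal E}$ has $s_i\ge0$, $e_i=s_i+r_i$; it is feasible if $s_1\le\dots\le s_M$ and $e_i\le H$ for all $i$. $b_i=|\{j: i<j,\ e_j<e_i\}|$, $B(S)=\sum_i b_i$. $S^*$ denotes an optimal schedule, i.e. a feasible schedule minimizing $B(S)$. *)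

theory Defs
  imports Complex_Main
begin

text \<open>Reduction instance NTP([a_j]_{j in A}, W), A = {1..N}.
  Employees are 1..M; a schedule is given by the start times s :: nat => real
  (only values on 1..M matter); e_i = s_i + r_i.\<close>

definition total :: "(nat \<Rightarrow> nat) \<Rightarrow> nat \<Rightarrow> nat" where
  "total a N = (\<Sum>j=1..N. a j)"

definition Memp :: "(nat \<Rightarrow> nat) \<Rightarrow> nat \<Rightarrow> nat" where
  "Memp a N = N + total a N + 1"

definition crit :: "(nat \<Rightarrow> nat) \<Rightarrow> nat \<Rightarrow> nat" where
  "crit a k = k + (\<Sum>j=1..<k. a j)"

definition stable :: "(nat \<Rightarrow> nat) \<Rightarrow> nat \<Rightarrow> nat set" where
  "stable a k = {i. crit a k < i \<and> i \<le> crit a k + a k}"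

definition resp :: "(nat \<Rightarrow> nat) \<Rightarrow> nat \<Rightarrow> nat \<Rightarrow> real" where
  "resp a N i =
    (if i = Memp a N then real (total a N)
     else if (\<exists>k\<in>{1..N}. i = crit a k)
       then real (\<Sum>j=1..(THE k. k \<in> {1..N} \<and> i = crit a k). a j)
     else if (\<exists>k\<in>{1..N}. i \<in> stable a k)
       then real (\<Sum>j=1..<(THE k. k \<in> {1..N} \<and> i \<in> stable a k). a j)
     else 0)"

definition Hbound :: "(nat \<Rightarrow> nat) \<Rightarrow> nat \<Rightarrow> nat \<Rightarrow> real" where
  "Hbound a N W = real (2 * total a N) - real W"

definition endt :: "(nat \<Rightarrow> nat) \<Rightarrow> nat \<Rightarrow> (nat \<Rightarrow> real) \<Rightarrow> nat \<Rightarrow> real" where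
  "endt a N s i = s i + resp a N i"

definition feasible :: "(nat \<Rightarrow> nat) \<Rightarrow> nat \<Rightarrow> nat \<Rightarrow> (nat \<Rightarrow> real) \<Rightarrow> bool" where
  "feasible a N W s \<longleftrightarrow>
     (\<forall>i\<in>{1..Memp a N}. 0 \<le> s i \<and> endt a N s i \<le> Hbound a N W) \<and>
     (\<forall>i\<in>{1..Memp a N}. \<forall>j\<in>{1..Memp a N}. i \<le> j \<longrightarrow> s i \<le> s j)"

definition bcount :: "(nat \<Rightarrow> nat) \<Rightarrow> nat \<Rightarrow> (nat \<Rightarrow> real) \<Rightarrow> nat \<Rightarrow> nat" where
  "bcount a N s i = card {j\<in>{1..Memp a N}. i < j \<and> endt a N s j < endt a N s i}"

definition Btot :: "(nat \<Rightarrow> nat) \<Rightarrow> nat \<Rightarrow> (nat \<Rightarrow> real) \<Rightarrow> nat" where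
  "Btot a N s = (\<Sum>i=1..Memp a N. bcount a N s i)"

definition optimal :: "(nat \<Rightarrow> nat) \<Rightarrow> nat \<Rightarrow> nat \<Rightarrow> (nat \<Rightarrow> real) \<Rightarrow> bool" where
  "optimal a N W s \<longleftrightarrow> feasible a N W s \<and>
     (\<forall>s'. feasible a N W s' \<longrightarrow> Btot a N s \<le> Btot a N s')"

end

theory Submission imports Defs begin
definition inb :: "(nat \<Rightarrow> nat) \<Rightarrow> nat \<Rightarrow> nat \<Rightarrow> bool" where
  "inb a k i \<longleftrightarrow> crit a k \<le> i \<and> i \<le> crit a k + a k"

lemma crit_Suc: "1 \<le> k \<Longrightarrow> crit a (Suc k) = crit a k + a k + 1"
  unfolding crit_def by (simp add: sum.atLeastLessThan_Suc)

lemma crit_less: "1 \<le> k \<Longrightarrow> k < k' \<Longrightarrow> crit a k + a k < crit a k'"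
proof (induction k')
  case 0 then show ?case by simp
next
  case (Suc k')
  show ?case
  proof (cases "k = k'")
    case True then show ?thesis using crit_Suc[OF Suc.prems(1)] by simp
  next
    case False
    then have "crit a k + a k < crit a k'" using Suc by simp
    moreover have "crit a (Suc k') = crit a k' + a k' + 1" using crit_Suc Suc.prems False by simp
    ultimately show ?thesis by simp
  qed
qed

lemma crit_ge1: "1 \<le> k \<Longrightarrow> 1 \<le> crit a k" unfolding crit_def by simp

lemma crit_last: "crit a (Suc N) = Memp a N"
  unfolding crit_def Memp_def total_def by (simp add: atLeastLessThanSuc_atLeastAtMost)

lemma cover: "m \<le> N \<Longrightarrow> 1 \<le> i \<Longrightarrow> i < crit a (Suc m) \<Longrightarrow> \<exists>k\<in>{1..m}. inb a k i"
proof (induction m)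
  case 0 then show ?case unfolding crit_def by simp
next
  case (Suc m)
  have e: "crit a (Suc (Suc m)) = crit a (Suc m) + a (Suc m) + 1" using crit_Suc by simp
  show ?case
  proof (cases "i < crit a (Suc m)")
    case True then show ?thesis using Suc by force
  next
    case False then have "inb a (Suc m) i" using Suc.prems e unfolding inb_def by simp
    then show ?thesis by force
  qed
qed

lemma cover_M: "i \<in> {1..Memp a N} \<Longrightarrow> i = Memp a N \<or> (\<exists>k\<in>{1..N}. inb a k i)"
  using cover[of N N i a] crit_last[of a N] by force

lemma inb_order: "1 \<le> k \<Longrightarrow> 1 \<le> k' \<Longrightarrow> inb a k i \<Longrightarrow> inb a k' j \<Longrightarrow> i \<le> j \<Longrightarrow> k \<le> k'"
  using crit_less[of k' k a] unfolding inb_def by (meson leI le_trans not_less)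

lemma inb_uniq: "1 \<le> k \<Longrightarrow> 1 \<le> k' \<Longrightarrow> inb a k i \<Longrightarrow> inb a k' i \<Longrightarrow> k = k'"
  using inb_order[of k k' a i i] inb_order[of k' k a i i] by simp

lemma inb_lt_M: "k \<in> {1..N} \<Longrightarrow> inb a k i \<Longrightarrow> i < Memp a N \<and> 1 \<le> i"
  using crit_less[of k "Suc N" a] crit_last[of a N] crit_ge1[of k a] unfolding inb_def by auto

lemma stable_inb: "i \<in> stable a k \<Longrightarrow> inb a k i" unfolding stable_def inb_def by auto

lemma resp_crit: "k \<in> {1..N} \<Longrightarrow> resp a N (crit a k) = real (\<Sum>j=1..k. a j)"
proof -
  assume k: "k \<in> {1..N}"
  have ne: "crit a k \<noteq> Memp a N" using inb_lt_M[OF k, of a "crit a k"] unfolding inb_def by simp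
  have th: "(THE k'. k' \<in> {1..N} \<and> crit a k = crit a k') = k"
  proof (rule the_equality)
    fix k' assume "k' \<in> {1..N} \<and> crit a k = crit a k'"
    then show "k' = k" using inb_uniq[of k k' a "crit a k"] k unfolding inb_def by auto
  qed (use k in auto)
  show ?thesis unfolding resp_def using ne th k by auto
qed

lemma resp_stable: "k \<in> {1..N} \<Longrightarrow> i \<in> stable a k \<Longrightarrow> resp a N i = real (\<Sum>j=1..<k. a j)"
proof -
  assume k: "k \<in> {1..N}" and i: "i \<in> stable a k"
  have ib: "inb a k i" using stable_inb[OF i] .
  have ne: "i \<noteq> Memp a N" using inb_lt_M[OF k ib] by simp
  have nc: "\<not> (\<exists>k'\<in>{1..N}. i = crit a k')"
  proof
    assume "\<exists>k'\<in>{1..N}. i = crit a k'"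
    then obtain k' where k': "k' \<in> {1..N}" "i = crit a k'" by blast
    then have "inb a k' i" unfolding inb_def by simp
    then have "k' = k" using inb_uniq[of k' k a i] k k' ib by auto
    then show False using i k' unfolding stable_def by simp
  qed
  have th: "(THE k'. k' \<in> {1..N} \<and> i \<in> stable a k') = k"
  proof (rule the_equality)
    fix k' assume "k' \<in> {1..N} \<and> i \<in> stable a k'"
    then show "k' = k" using inb_uniq[of k k' a i] k ib stable_inb by auto
  qed (use k i in auto)
  show ?thesis unfolding resp_def using ne nc th k i by auto
qed

lemma resp_M: "resp a N (Memp a N) = real (total a N)" unfolding resp_def by simp

lemma sum_split: "1 \<le> (k::nat) \<Longrightarrow> (\<Sum>j=1..k. a j) = (\<Sum>j=1..<k. a j) + (a k::nat)"
proof -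
  assume "1 \<le> k"
  then have "(\<Sum>j=1..<Suc k. a j) = (\<Sum>j=1..<k. a j) + a k" by (rule sum.atLeastLessThan_Suc)
  then show ?thesis by (simp only: atLeastLessThanSuc_atLeastAtMost)
qed

lemma card_stable: "card (stable a k) = a k"
proof -
  have "stable a k = {crit a k<..crit a k + a k}" unfolding stable_def by auto
  then show ?thesis by simp
qed

lemma crit_inj: "inj_on (crit a) {1..N}"
proof (rule inj_onI)
  fix x y assume "x \<in> {1..N}" "y \<in> {1..N}" "crit a x = crit a y"
  then show "x = y" using crit_less[of x y a] crit_less[of y x a] by (cases "x < y"; cases "y < x"; auto)
qed

lemma lower:
  assumes f: "feasible a N W s"
  shows "\<exists>D\<subseteq>{1..N}. (\<Sum>k\<in>D. a k) \<le> Btot a N s \<and> W \<le> (\<Sum>k\<in>D. a k)"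
proof -
  let ?M = "Memp a N"
  let ?H = "Hbound a N W"
  have f1: "\<And>i. i \<in> {1..?M} \<Longrightarrow> 0 \<le> s i \<and> endt a N s i \<le> ?H" using f unfolding feasible_def by blast
  have f2: "\<And>i j. i \<in> {1..?M} \<Longrightarrow> j \<in> {1..?M} \<Longrightarrow> i \<le> j \<Longrightarrow> s i \<le> s j"
    using f unfolding feasible_def by blast
  define D where "D = {k\<in>{1..N}. \<forall>i\<in>stable a k. s i < s (crit a k) + real (a k)}"
  have DN: "D \<subseteq> {1..N}" unfolding D_def by auto
  have c1: "a k \<le> bcount a N s (crit a k)" if kD: "k \<in> D" for k
  proof -
    have k: "k \<in> {1..N}" using kD DN by auto
    have "stable a k \<subseteq> {j\<in>{1..?M}. crit a k < j \<and> endt a N s j < endt a N s (crit a k)}"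
    proof
      fix j assume j: "j \<in> stable a k"
      have "j < ?M \<and> 1 \<le> j" using inb_lt_M[OF k stable_inb[OF j]] .
      moreover have "crit a k < j" using j unfolding stable_def by simp
      moreover have "endt a N s j < endt a N s (crit a k)"
      proof -
        have "real (\<Sum>j=1..k. a j) = real (\<Sum>j=1..<k. a j) + real (a k)" using sum_split[of k a] k by simp
        moreover have "s j < s (crit a k) + real (a k)" using kD j unfolding D_def by auto
        ultimately show ?thesis unfolding endt_def resp_stable[OF k j] resp_crit[OF k] by linarith
      qed
      ultimately show "j \<in> {j\<in>{1..?M}. crit a k < j \<and> endt a N s j < endt a N s (crit a k)}" by auto
    qed
    then have "card (stable a k) \<le> bcount a N s (crit a k)" unfolding bcount_def
      by (rule card_mono[rotated]) auto
    then show ?thesis using card_stable by simp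
  qed
  have s1: "(\<Sum>k\<in>D. a k) \<le> Btot a N s"
  proof -
    have "(\<Sum>k\<in>D. a k) \<le> (\<Sum>k\<in>D. bcount a N s (crit a k))" using c1 by (rule sum_mono)
    also have "\<dots> = (\<Sum>i\<in>crit a ` D. bcount a N s i)"
      using sum.reindex[OF inj_on_subset[OF crit_inj[of a N] DN], of "bcount a N s"] by simp
    also have "\<dots> \<le> (\<Sum>i=1..?M. bcount a N s i)"
    proof (rule sum_mono2)
      show "crit a ` D \<subseteq> {1..?M}"
      proof
        fix x assume "x \<in> crit a ` D"
        then obtain k where "k \<in> D" "x = crit a k" by blast
        then show "x \<in> {1..?M}" using DN inb_lt_M[of k N a x] unfolding inb_def by auto
      qed
    qed auto
    finally show ?thesis unfolding Btot_def .
  qed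
  have c2: "m \<le> N \<Longrightarrow> real (\<Sum>k\<in>{1..m}-D. a k) \<le> s (crit a (Suc m))" for m
  proof (induction m)
    case 0 then show ?case using f1[of 1] unfolding crit_def Memp_def by simp
  next
    case (Suc m)
    let ?k = "Suc m"
    have k: "?k \<in> {1..N}" using Suc by simp
    have cM: "crit a (Suc ?k) \<in> {1..?M}"
    proof (cases "Suc ?k = Suc N")
      case True then show ?thesis using crit_last[of a N] crit_ge1[of "Suc ?k" a] by auto
    next
      case False then show ?thesis using crit_less[of "Suc ?k" "Suc N" a] crit_last[of a N] crit_ge1[of "Suc ?k" a] Suc.prems by auto
    qed
    have ck: "crit a ?k \<in> {1..?M}" using inb_lt_M[OF k, of a "crit a ?k"] unfolding inb_def by auto
    have cS: "crit a (Suc ?k) = crit a ?k + a ?k + 1" using crit_Suc by simp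
    have mono: "s (crit a ?k) \<le> s (crit a (Suc ?k))" using f2[OF ck cM] cS by simp
    show ?case
    proof (cases "?k \<in> D")
      case True
      then have "{1..?k} - D = {1..m} - D" using le_Suc_eq by auto
      then show ?thesis using Suc mono by simp
    next
      case False
      then obtain i where i: "i \<in> stable a ?k" "s (crit a ?k) + real (a ?k) \<le> s i"
        using k unfolding D_def by force
      have iM: "i \<in> {1..?M}" using inb_lt_M[OF k stable_inb[OF i(1)]] by auto
      have "i \<le> crit a (Suc ?k)" using i(1) cS unfolding stable_def by simp
      then have "s i \<le> s (crit a (Suc ?k))" using f2[OF iM cM] by simp
      moreover have "{1..?k} - D = insert ?k ({1..m} - D)" using False by auto
      moreover have "finite ({1..m} - D)" by simp
      ultimately have "real (\<Sum>k\<in>{1..?k}-D. a k) = real (a ?k) + real (\<Sum>k\<in>{1..m}-D. a k)" by simp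
      then show ?thesis using Suc i(2) \<open>s i \<le> s (crit a (Suc ?k))\<close> by linarith
    qed
  qed
  have "real (\<Sum>k\<in>{1..N}-D. a k) \<le> s ?M" using c2[of N] crit_last[of a N] by simp
  moreover have "s ?M + real (total a N) \<le> ?H" using f1[of ?M] resp_M[of a N] unfolding endt_def Memp_def by simp
  moreover have "real (total a N) = real (\<Sum>k\<in>D. a k) + real (\<Sum>k\<in>{1..N}-D. a k)"
  proof -
    have "total a N = (\<Sum>k\<in>D. a k) + (\<Sum>k\<in>{1..N}-D. a k)"
      unfolding total_def using sum.subset_diff[OF DN, of a] by simp
    then show ?thesis by (simp only: of_nat_add[symmetric])
  qed
  moreover have "Hbound a N W = 2 * real (total a N) - real W" unfolding Hbound_def by simp
  ultimately have "real W \<le> real (\<Sum>k\<in>D. a k)"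
    by linarith
  then have "W \<le> (\<Sum>k\<in>D. a k)" by (simp only: of_nat_le_iff)
  then show ?thesis using s1 DN by blast
qed

definition G :: "(nat \<Rightarrow> nat) \<Rightarrow> nat \<Rightarrow> nat set \<Rightarrow> nat \<Rightarrow> nat" where
  "G a N A' k = (\<Sum>j\<in>{j\<in>{1..N}. j \<notin> A' \<and> j < k}. a j)"

definition sc :: "(nat \<Rightarrow> nat) \<Rightarrow> nat \<Rightarrow> nat set \<Rightarrow> nat \<Rightarrow> real" where
  "sc a N A' i = real (\<Sum>j\<in>{j\<in>{1..N}. j \<notin> A' \<and> crit a j < i}. a j)"

lemma crit_lt_iff: "1 \<le> j \<Longrightarrow> 1 \<le> k \<Longrightarrow> crit a j < crit a k \<longleftrightarrow> j < k"
  using crit_less[of j k a] crit_less[of k j a] by (cases "j < k"; cases "k < j"; auto)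

lemma sc_crit: "k \<in> {1..N} \<Longrightarrow> sc a N A' (crit a k) = real (G a N A' k)"
proof -
  assume k: "k \<in> {1..N}"
  have "{j\<in>{1..N}. j \<notin> A' \<and> crit a j < crit a k} = {j\<in>{1..N}. j \<notin> A' \<and> j < k}"
    using crit_lt_iff[of _ k a] k by auto
  then show ?thesis unfolding sc_def G_def by simp
qed

lemma sc_stable: "k \<in> {1..N} \<Longrightarrow> i \<in> stable a k \<Longrightarrow> sc a N A' i = real (G a N A' (Suc k))"
proof -
  assume k: "k \<in> {1..N}" and i: "i \<in> stable a k"
  have "crit a j < i \<longleftrightarrow> j < Suc k" if j: "j \<in> {1..N}" for j
  proof (cases "j < Suc k")
    case True
    then have "crit a j \<le> crit a k" using crit_lt_iff[of j k a] j k by (cases "j = k") auto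
    then show ?thesis using i True unfolding stable_def by auto
  next
    case False
    then have "crit a k + a k < crit a j" using crit_less[of k j a] k by auto
    then show ?thesis using i False unfolding stable_def by auto
  qed
  then have "{j\<in>{1..N}. j \<notin> A' \<and> crit a j < i} = {j\<in>{1..N}. j \<notin> A' \<and> j < Suc k}" by auto
  then show ?thesis unfolding sc_def G_def by simp
qed

lemma sc_M: "sc a N A' (Memp a N) = real (G a N A' (Suc N))"
proof -
  have "{j\<in>{1..N}. j \<notin> A' \<and> crit a j < Memp a N} = {j\<in>{1..N}. j \<notin> A' \<and> j < Suc N}"
  proof -
    have "crit a j < Memp a N" if "j \<in> {1..N}" for j using inb_lt_M[of j N a "crit a j"] that unfolding inb_def by auto
    then show ?thesis by auto
  qed
  then show ?thesis unfolding sc_def G_def by simp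
qed

lemma G_Suc: "k \<in> {1..N} \<Longrightarrow> G a N A' (Suc k) = G a N A' k + (if k \<in> A' then 0 else a k)"
proof -
  assume k: "k \<in> {1..N}"
  show ?thesis
  proof (cases "k \<in> A'")
    case True
    then have "{j\<in>{1..N}. j \<notin> A' \<and> j < Suc k} = {j\<in>{1..N}. j \<notin> A' \<and> j < k}" using less_Suc_eq by auto
    then show ?thesis using True unfolding G_def by simp
  next
    case False
    then have "{j\<in>{1..N}. j \<notin> A' \<and> j < Suc k} = insert k {j\<in>{1..N}. j \<notin> A' \<and> j < k}" using k less_Suc_eq by auto
    then show ?thesis using False unfolding G_def by simp
  qed
qed

lemma G_mono: "k \<le> k' \<Longrightarrow> G a N A' k \<le> G a N A' k'"
  unfolding G_def by (rule sum_mono2) auto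

lemma Q_mono: "1 \<le> (k::nat) \<Longrightarrow> k < k' \<Longrightarrow> (\<Sum>j=1..<k. a j) + a k \<le> (\<Sum>j=1..<k'. (a j :: nat))"
proof -
  assume "1 \<le> k" "k < k'"
  then have "(\<Sum>j=1..<k. a j) + a k = (\<Sum>j=1..<Suc k. a j)" by (simp add: sum.atLeastLessThan_Suc)
  also have "\<dots> \<le> (\<Sum>j=1..<k'. a j)" using \<open>k < k'\<close> by (intro sum_mono2) auto
  finally show ?thesis .
qed

lemma endt_inb:
  assumes k: "k \<in> {1..N}" and i: "inb a k i"
  shows "endt a N (sc a N A') i = real (if i = crit a k then G a N A' k + (\<Sum>j=1..<k. a j) + a k
                                        else G a N A' (Suc k) + (\<Sum>j=1..<k. a j))"
proof (cases "i = crit a k")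
  case True
  have "(\<Sum>j=1..k. a j) = (\<Sum>j=1..<k. a j) + a k" using sum_split[of k a] k by simp
  then have "endt a N (sc a N A') (crit a k) = real (G a N A' k + ((\<Sum>j=1..<k. a j) + a k))"
    by (simp only: endt_def resp_crit[OF k] sc_crit[OF k] of_nat_add)
  then show ?thesis using True by (simp add: add.assoc)
next
  case False
  then have ist: "i \<in> stable a k" using i unfolding inb_def stable_def by auto
  show ?thesis using False unfolding endt_def resp_stable[OF k ist] sc_stable[OF k ist] by simp
qed

lemma endt_M: "endt a N (sc a N A') (Memp a N) = real (G a N A' (Suc N) + total a N)"
  unfolding endt_def sc_M resp_M by simp


lemma endt_upper:
  assumes k: "k \<in> {1..N}" and i: "inb a k i"
  shows "endt a N (sc a N A') i \<le> real (G a N A' k + (\<Sum>j=1..<k. a j) + a k)"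
  using endt_inb[OF k i, of A'] G_Suc[OF k, of a A'] by auto

lemma endt_lower:
  assumes k: "k \<in> {1..N}" and i: "inb a k i"
  shows "real (G a N A' k + (\<Sum>j=1..<k. a j)) \<le> endt a N (sc a N A') i"
  using endt_inb[OF k i, of A'] G_Suc[OF k, of a A'] by auto

lemma bc_set:
  assumes pos: "\<forall>j\<in>{1..N}. 0 < a j" and k: "k \<in> {1..N}" and i: "inb a k i"
  shows "{j\<in>{1..Memp a N}. i < j \<and> endt a N (sc a N A') j < endt a N (sc a N A') i}
         = (if i = crit a k \<and> k \<in> A' then stable a k else {})"
    (is "?S = ?R")
proof
  let ?E = "endt a N (sc a N A')"
  show "?S \<subseteq> ?R"
  proof
    fix j assume j: "j \<in> ?S"
    then have jM: "j \<in> {1..Memp a N}" and ij: "i < j" and lt: "?E j < ?E i" by auto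
    have up: "?E i \<le> real (G a N A' k + (\<Sum>j=1..<k. a j) + a k)" using endt_upper[OF k i] .
    show "j \<in> ?R"
    proof (cases "j = Memp a N")
      case True
      have "G a N A' k \<le> G a N A' (Suc N)" using k by (intro G_mono) auto
      moreover have "(\<Sum>j=1..<k. a j) + a k \<le> total a N"
      proof -
        have "(\<Sum>j=1..k. a j) \<le> (\<Sum>j=1..N. a j)" using k by (intro sum_mono2) auto
        then show ?thesis using k sum_split[of k a] unfolding total_def by simp
      qed
      ultimately have "G a N A' k + (\<Sum>j=1..<k. a j) + a k \<le> G a N A' (Suc N) + total a N" by simp
      then have "real (G a N A' k + (\<Sum>j=1..<k. a j) + a k) \<le> real (G a N A' (Suc N) + total a N)"
        by (simp only: of_nat_le_iff)
      then have "?E i \<le> ?E j" using up True endt_M[of a N A'] by (metis order_trans)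
      then show ?thesis using lt by simp
    next
      case False
      then obtain k' where k': "k' \<in> {1..N}" "inb a k' j" using cover_M[OF jM] by blast
      have kk: "k \<le> k'" using inb_order[of k k' a i j] k k' i ij by auto
      show ?thesis
      proof (cases "k = k'")
        case False
        then have "k < k'" using kk by simp
        have "G a N A' k \<le> G a N A' k'" using kk by (rule G_mono)
        moreover have "(\<Sum>j=1..<k. a j) + a k \<le> (\<Sum>j=1..<k'. a j)" using Q_mono[of k k' a] k \<open>k < k'\<close> by simp
        ultimately have "G a N A' k + (\<Sum>j=1..<k. a j) + a k \<le> G a N A' k' + (\<Sum>j=1..<k'. a j)" by simp
        then have "real (G a N A' k + (\<Sum>j=1..<k. a j) + a k) \<le> real (G a N A' k' + (\<Sum>j=1..<k'. a j))"
          by (simp only: of_nat_le_iff)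
        then have "?E i \<le> ?E j" using up endt_lower[OF k'(1) k'(2), of A'] by (metis order_trans)
        then show ?thesis using lt by simp
      next
        case True
        have jn: "j \<noteq> crit a k" using ij i unfolding inb_def by simp
        then have js: "j \<in> stable a k" using k'(2) True unfolding inb_def stable_def by auto
        have Ej: "?E j = real (G a N A' (Suc k) + (\<Sum>j=1..<k. a j))" using endt_inb[OF k'(1) k'(2), of A'] True jn by simp
        show ?thesis
        proof (cases "i = crit a k")
          case False
          then have "?E i = ?E j" using endt_inb[OF k i, of A'] Ej by simp
          then show ?thesis using lt by simp
        next
          case ic: True
          show ?thesis
          proof (cases "k \<in> A'")
            case True then show ?thesis using ic js by simp
          next
            case False
            then have "?E i = ?E j" using endt_inb[OF k i, of A'] Ej ic G_Suc[OF k, of a A'] by simp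
            then show ?thesis using lt by simp
          qed
        qed
      qed
    qed
  qed
  show "?R \<subseteq> ?S"
  proof (cases "i = crit a k \<and> k \<in> A'")
    case True
    show ?thesis
    proof
      fix j assume "j \<in> ?R"
      then have js: "j \<in> stable a k" using True by simp
      have jb: "inb a k j" using stable_inb[OF js] .
      have jn: "j \<noteq> crit a k" using js unfolding stable_def by simp
      have "?E j = real (G a N A' k + (\<Sum>j=1..<k. a j))"
        using endt_inb[OF k jb, of A'] jn G_Suc[OF k, of a A'] True by simp
      moreover have "?E i = real (G a N A' k + (\<Sum>j=1..<k. a j) + a k)"
        using endt_inb[OF k i, of A'] True by simp
      moreover have "0 < a k" using pos k by simp
      ultimately have "?E j < ?E i" by simp
      moreover have "j \<in> {1..Memp a N}" using inb_lt_M[OF k jb] by simp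
      moreover have "i < j" using True js unfolding stable_def by simp
      ultimately show "j \<in> ?S" by simp
    qed
  next
    case False then show ?thesis by auto
  qed
qed


lemma U_le: "k \<in> {1..N} \<Longrightarrow> G a N A' k + (\<Sum>j=1..<k. a j) + a k \<le> G a N A' (Suc N) + total a N"
proof -
  assume k: "k \<in> {1..N}"
  have "G a N A' k \<le> G a N A' (Suc N)" using k by (intro G_mono) auto
  moreover have "(\<Sum>j=1..k. a j) \<le> (\<Sum>j=1..N. a j)" using k by (intro sum_mono2) auto
  ultimately show ?thesis using k sum_split[of k a] unfolding total_def by simp
qed

lemma construct:
  assumes pos: "\<forall>j\<in>{1..N}. 0 < a j" and A: "A' \<subseteq> {1..N}" and W: "(\<Sum>j\<in>A'. a j) = W"
  shows "feasible a N W (sc a N A') \<and> Btot a N (sc a N A') = W"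
proof -
  let ?s = "sc a N A'"
  let ?E = "endt a N ?s"
  let ?M = "Memp a N"
  have GW: "G a N A' (Suc N) + W = total a N"
  proof -
    have "{j\<in>{1..N}. j \<notin> A' \<and> j < Suc N} = {1..N} - A'" by auto
    then have "G a N A' (Suc N) = (\<Sum>j\<in>{1..N} - A'. a j)" unfolding G_def by simp
    then show ?thesis using sum.subset_diff[OF A, of a] W unfolding total_def by simp
  qed
  have r: "real (total a N) = real (G a N A' (Suc N)) + real W" using GW[symmetric] by simp
  have EM: "?E ?M = Hbound a N W" unfolding endt_M Hbound_def using r
    by (simp add: algebra_simps)
  have feas: "feasible a N W ?s"
    unfolding feasible_def
  proof (intro conjI ballI impI)
    fix i assume i: "i \<in> {1..?M}"
    show "0 \<le> ?s i" unfolding sc_def by (rule of_nat_0_le_iff)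
    show "?E i \<le> Hbound a N W"
    proof (cases "i = ?M")
      case True then show ?thesis using EM by simp
    next
      case False
      then obtain k where k: "k \<in> {1..N}" "inb a k i" using cover_M[OF i] by blast
      have "real (G a N A' k + (\<Sum>j=1..<k. a j) + a k) \<le> real (G a N A' (Suc N) + total a N)"
        using U_le[OF k(1), of a A'] by (simp only: of_nat_le_iff)
      then show ?thesis using endt_upper[OF k, of A'] EM endt_M[of a N A'] by (metis order_trans)
    qed
  next
    fix i j :: nat assume "i \<le> j"
    then show "?s i \<le> ?s j" unfolding sc_def by (simp add: sum_mono2 Collect_mono)
  qed
  have bc_crit: "bcount a N ?s (crit a k) = a k" if k: "k \<in> A'" for k
  proof -
    have kN: "k \<in> {1..N}" using k A by auto
    have "inb a k (crit a k)" unfolding inb_def by simp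
    from bc_set[OF pos kN this, of A'] k show ?thesis unfolding bcount_def by (simp add: card_stable)
  qed
  have bc_zero: "bcount a N ?s i = 0" if i: "i \<in> {1..?M} - crit a ` A'" for i
  proof (cases "i = ?M")
    case True then show ?thesis unfolding bcount_def by simp
  next
    case False
    then obtain k where k: "k \<in> {1..N}" "inb a k i" using cover_M[of i a N] i by blast
    have nc: "\<not> (i = crit a k \<and> k \<in> A')" using i by auto
    show ?thesis unfolding bcount_def bc_set[OF pos k, of A'] if_not_P[OF nc] by simp
  qed
  have sub: "crit a ` A' \<subseteq> {1..?M}"
  proof
    fix x assume "x \<in> crit a ` A'"
    then obtain k where "k \<in> A'" "x = crit a k" by blast
    then show "x \<in> {1..?M}" using A inb_lt_M[of k N a x] unfolding inb_def by auto
  qed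
  have "Btot a N ?s = (\<Sum>i\<in>crit a ` A'. bcount a N ?s i)"
    unfolding Btot_def by (rule sum.mono_neutral_right) (use sub bc_zero in auto)
  also have "\<dots> = (\<Sum>k\<in>A'. bcount a N ?s (crit a k))"
    using sum.reindex[OF inj_on_subset[OF crit_inj[of a N] A], of "bcount a N ?s"] by simp
  also have "\<dots> = (\<Sum>k\<in>A'. a k)" using bc_crit by simp
  finally show ?thesis using feas W by simp
qed

theorem theorem2:
  fixes a :: "nat \<Rightarrow> nat" and N W :: nat
  assumes "N \<ge> 1"
    and "\<forall>j\<in>{1..N}. a j > 0"
    and "W > 0"
    and "W \<le> (\<Sum>j=1..N. a j)"
  shows "(\<exists>s. optimal a N W s \<and> Btot a N s = W) \<longleftrightarrow>
         (\<exists>A'\<subseteq>{1..N}. (\<Sum>j\<in>A'. a j) = W)"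
proof
  assume "\<exists>s. optimal a N W s \<and> Btot a N s = W"
  then obtain s where "feasible a N W s" "Btot a N s = W" unfolding optimal_def by blast
  then obtain D where "D \<subseteq> {1..N}" "(\<Sum>k\<in>D. a k) \<le> W" "W \<le> (\<Sum>k\<in>D. a k)" using lower by metis
  then show "\<exists>A'\<subseteq>{1..N}. (\<Sum>j\<in>A'. a j) = W" by (intro exI[of _ D]) auto
next
  assume "\<exists>A'\<subseteq>{1..N}. (\<Sum>j\<in>A'. a j) = W"
  then obtain A' where A: "A' \<subseteq> {1..N}" "(\<Sum>j\<in>A'. a j) = W" by blast
  have c: "feasible a N W (sc a N A')" "Btot a N (sc a N A') = W" using construct[OF assms(2) A] by auto
  have "optimal a N W (sc a N A')"
    unfolding optimal_def
  proof (intro conjI allI impI)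
    fix s' assume "feasible a N W s'"
    then obtain D where "D \<subseteq> {1..N}" "(\<Sum>k\<in>D. a k) \<le> Btot a N s'" "W \<le> (\<Sum>k\<in>D. a k)" using lower by metis
    then show "Btot a N (sc a N A') \<le> Btot a N s'" using c by simp
  qed (use c in simp)
  then show "\<exists>s. optimal a N W s \<and> Btot a N s = W" using c by blast
qed

end
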